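(* A skew-convex function $f\colon X\to K$ is skew invertible if and only if $f(X)\subseteq K^*$ and for every $x\in X$ there exists $a\in K^*$ such that $f({}^{a}x)=a^{-1}$.
   Context: Let $K$ be a skew field, $K^*=K\setminus\{0\}$, and $X$ a nonempty set with a left $K^*$-action $(a,x)\mapsto{}^{a}x$. $\mathcal F(X)$ is the set of functions $X\to K$ with pointwise addition; the constant function with value $a\in K$ is denoted $a$. The skew product is $(f\diamond g)(x)=f({}^{g(x)}x)\,g(x)$ if $g(x)\neq0$ and $0$ if $g(x)=0$. A function $f$ is skew convex if $f\diamond(a+b)=f\diamond a+f\diamond b$ for all $a,b\in K$. $f$ is skew invertible if there is $g\in\mathcal F(X)$ with $f\diamond g=g\diamond f=1$. *)

theory Defs
  imports Main
begin

text \<open>A skew field K is modelled by a type of class division_ring; the set X by a type 'x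
(types are nonempty). A left action of the multiplicative group K* on X is a function
act :: 'k => 'x => 'x whose values at a = 0 are irrelevant.\<close>

definition left_action :: "('k::division_ring \<Rightarrow> 'x \<Rightarrow> 'x) \<Rightarrow> bool" where
  "left_action act \<longleftrightarrow>
     (\<forall>x. act 1 x = x) \<and>
     (\<forall>a b x. a \<noteq> 0 \<longrightarrow> b \<noteq> 0 \<longrightarrow> act (a * b) x = act a (act b x))"

definition skew_prod ::
  "('k::division_ring \<Rightarrow> 'x \<Rightarrow> 'x) \<Rightarrow> ('x \<Rightarrow> 'k) \<Rightarrow> ('x \<Rightarrow> 'k) \<Rightarrow> 'x \<Rightarrow> 'k" where
  "skew_prod act f g = (\<lambda>x. if g x = 0 then 0 else f (act (g x) x) * g x)"

definition skew_convex :: "('k::division_ring \<Rightarrow> 'x \<Rightarrow> 'x) \<Rightarrow> ('x \<Rightarrow> 'k) \<Rightarrow> bool" where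
  "skew_convex act f \<longleftrightarrow>
     (\<forall>a b. skew_prod act f (\<lambda>_. a + b) =
            (\<lambda>x. skew_prod act f (\<lambda>_. a) x + skew_prod act f (\<lambda>_. b) x))"

definition skew_invertible :: "('k::division_ring \<Rightarrow> 'x \<Rightarrow> 'x) \<Rightarrow> ('x \<Rightarrow> 'k) \<Rightarrow> bool" where
  "skew_invertible act f \<longleftrightarrow>
     (\<exists>g. skew_prod act f g = (\<lambda>_. 1) \<and> skew_prod act g f = (\<lambda>_. 1))"

end

theory Submission
  imports Defs
begin

theorem proposition2p10:
  fixes act :: "'k::division_ring \<Rightarrow> 'x \<Rightarrow> 'x" and f :: "'x \<Rightarrow> 'k"
  assumes "left_action act"
    and "skew_convex act f"
  shows "skew_invertible act f \<longleftrightarrow>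
           ((\<forall>x. f x \<noteq> 0) \<and> (\<forall>x. \<exists>a. a \<noteq> 0 \<and> f (act a x) = inverse a))"
proof
  assume "skew_invertible act f"
  then obtain g where g1: "skew_prod act f g = (\<lambda>_. 1)" and g2: "skew_prod act g f = (\<lambda>_. 1)"
    unfolding skew_invertible_def by blast
  have A: "f x \<noteq> 0" for x
    using fun_cong[OF g2, of x] by (auto simp: skew_prod_def split: if_splits)
  have B: "\<exists>a. a \<noteq> 0 \<and> f (act a x) = inverse a" for x
  proof -
    have h: "(if g x = 0 then 0 else f (act (g x) x) * g x) = 1"
      using fun_cong[OF g1, of x] by (simp add: skew_prod_def)
    then have "g x \<noteq> 0" by (auto split: if_splits)
    with h have "f (act (g x) x) * g x = 1" by simp
    then have "f (act (g x) x) = inverse (g x)"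
      using \<open>g x \<noteq> 0\<close> by (metis inverse_unique inverse_inverse_eq)
    with \<open>g x \<noteq> 0\<close> show ?thesis by blast
  qed
  show "(\<forall>x. f x \<noteq> 0) \<and> (\<forall>x. \<exists>a. a \<noteq> 0 \<and> f (act a x) = inverse a)"
    using A B by blast
next
  assume H: "(\<forall>x. f x \<noteq> 0) \<and> (\<forall>x. \<exists>a. a \<noteq> 0 \<and> f (act a x) = inverse a)"
  define phi where "phi x a = (if a = 0 then 0 else f (act a x) * a)" for x a
  have add: "phi x (a + b) = phi x a + phi x b" for x a b
    using fun_cong[OF assms(2)[unfolded skew_convex_def, rule_format, of a b], of x]
    by (simp add: skew_prod_def phi_def)
  have ker: "phi x a = 0 \<Longrightarrow> a = 0" for x a
    using H by (auto simp: phi_def split: if_splits)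
  have uniq: "a = b" if "a \<noteq> 0" "f (act a x) = inverse a" "b \<noteq> 0" "f (act b x) = inverse b" for a b x
  proof -
    have "phi x a = 1" "phi x b = 1" using that by (simp_all add: phi_def)
    moreover have "phi x a = phi x b + phi x (a - b)" using add[of x b "a - b"] by simp
    ultimately have "phi x (a - b) = 0" by simp
    then have "a - b = 0" by (rule ker)
    then show ?thesis by simp
  qed
  define g where "g x = (SOME a. a \<noteq> 0 \<and> f (act a x) = inverse a)" for x
  have gs: "g x \<noteq> 0 \<and> f (act (g x) x) = inverse (g x)" for x
    unfolding g_def using H by (metis (mono_tags, lifting) someI_ex)
  have "skew_prod act f g = (\<lambda>_. 1)"
    using gs by (auto simp: skew_prod_def fun_eq_iff)
  moreover have "skew_prod act g f = (\<lambda>_. 1)"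
  proof (rule ext)
    fix x
    let ?y = "act (f x) x"
    have fx: "f x \<noteq> 0" using H by blast
    have "act (inverse (f x)) ?y = x"
      using assms(1) fx unfolding left_action_def
      by (metis inverse_nonzero_iff_nonzero left_inverse)
    then have "f (act (inverse (f x)) ?y) = inverse (inverse (f x))" by simp
    then have "g ?y = inverse (f x)"
      using uniq[of "g ?y" ?y "inverse (f x)"] gs[of ?y] fx by simp
    then show "skew_prod act g f x = 1"
      using fx by (simp add: skew_prod_def)
  qed
  ultimately show "skew_invertible act f" unfolding skew_invertible_def by blast
qed

end
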